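(* A C*-algebra $A$ possesses a quasi-identity if and only if $A$ is unital. In this case, the identity is the only quasi-identity of $A$.
   Context: A quasi-identity of a ring $R$ is an element $e\in R$ with $r=er+re-ere$ for all $r\in R$. *)

theory Defs
  imports "HOL-Analysis.Analysis"
begin

definition cstar_algebra ::
  "(complex \<Rightarrow> 'a::{real_normed_algebra,banach} \<Rightarrow> 'a) \<Rightarrow> ('a \<Rightarrow> 'a) \<Rightarrow> bool" where
  "cstar_algebra scaleC star \<longleftrightarrow>
     (\<forall>a x y. scaleC a (x + y) = scaleC a x + scaleC a y) \<and>
     (\<forall>a b x. scaleC (a + b) x = scaleC a x + scaleC b x) \<and>
     (\<forall>a b x. scaleC a (scaleC b x) = scaleC (a * b) x) \<and>
     (\<forall>x. scaleC 1 x = x) \<and>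
     (\<forall>r x. scaleC (complex_of_real r) x = scaleR r x) \<and>
     (\<forall>a x. norm (scaleC a x) = cmod a * norm x) \<and>
     (\<forall>a x y. scaleC a (x * y) = scaleC a x * y) \<and>
     (\<forall>a x y. scaleC a (x * y) = x * scaleC a y) \<and>
     (\<forall>x. star (star x) = x) \<and>
     (\<forall>x y. star (x + y) = star x + star y) \<and>
     (\<forall>a x. star (scaleC a x) = scaleC (cnj a) (star x)) \<and>
     (\<forall>x y. star (x * y) = star y * star x) \<and>
     (\<forall>x. norm (star x * x) = (norm x)\<^sup>2)"

definition quasi_identity :: "'a::ring \<Rightarrow> bool" where
  "quasi_identity e \<longleftrightarrow> (\<forall>r. r = e * r + r * e - e * r * e)"

definition is_identity :: "'a::ring \<Rightarrow> bool" where
  "is_identity u \<longleftrightarrow> (\<forall>x. u * x = x \<and> x * u = x)"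

definition unital :: "'a::ring itself \<Rightarrow> bool" where
  "unital _ \<longleftrightarrow> (\<exists>u::'a. is_identity u)"

end

theory Submission
  imports Defs
begin

lemma star_diff:
  assumes "cstar_algebra scaleC star"
  shows "star (x - y) = star x - star (y::'a::{real_normed_algebra,banach})"
proof -
  have "star (x - y) + star y = star x"
    using assms unfolding cstar_algebra_def by (metis diff_add_cancel)
  thus ?thesis by (metis add_diff_cancel)
qed

lemma ccc_zero:
  fixes star :: "'a::{real_normed_algebra,banach} \<Rightarrow> 'a"
  assumes A: "cstar_algebra scaleC star"
    and h: "c * star c * c = (0::'a::{real_normed_algebra,banach})"
  shows "c = 0"
proof -
  have ss: "star (star c * c) = star c * c"
    using A unfolding cstar_algebra_def by simp
  have "star c * c * (star c * c) = star c * (c * star c * c)"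
    by (simp add: mult.assoc)
  also have "\<dots> = 0" using h by simp
  finally have "norm (star (star c * c) * (star c * c)) = 0" using ss by simp
  hence "(norm (star c * c))\<^sup>2 = 0"
    using A unfolding cstar_algebra_def by metis
  hence "norm (star c * c) = 0" by simp
  hence "(norm c)\<^sup>2 = 0"
    using A unfolding cstar_algebra_def by metis
  thus ?thesis by simp
qed

lemma qi_identity:
  fixes star :: "'a::{real_normed_algebra,banach} \<Rightarrow> 'a"
  assumes A: "cstar_algebra scaleC star"
    and q: "quasi_identity (e::'a::{real_normed_algebra,banach})"
  shows "is_identity e"
  unfolding is_identity_def
proof (intro allI conjI)
  fix x :: 'a
  have qq: "\<And>r. r = e * r + r * e - e * r * e" using q unfolding quasi_identity_def by blast
  define c where "c = x - e * x"
  have cs: "star c = star x - star x * star e"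
    using star_diff[OF A] A unfolding c_def cstar_algebra_def by metis
  define w where "w = x * star c"
  have "c * star c * c = (w - (e * w + w * e - e * w * e)) * x"
    unfolding c_def w_def by (simp add: algebra_simps)
  also have "\<dots> = 0" using qq[of w] by simp
  finally have "c = 0" using ccc_zero[OF A] by blast
  thus "e * x = x" unfolding c_def by simp
next
  fix x :: 'a
  have qq: "\<And>r. r = e * r + r * e - e * r * e" using q unfolding quasi_identity_def by blast
  define d where "d = x - x * e"
  have ds: "star d = star x - star e * star x"
    using star_diff[OF A] A unfolding d_def cstar_algebra_def by metis
  define z where "z = star d * x"
  have "d * star d * d = x * (z - (e * z + z * e - e * z * e))"
    unfolding d_def z_def by (simp add: algebra_simps)
  also have "\<dots> = 0" using qq[of z] by simp
  finally have "d = 0" using ccc_zero[OF A] by blast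
  thus "x * e = x" unfolding d_def by simp
qed

theorem proposition4p5:
  fixes scaleC :: "complex \<Rightarrow> 'a::{real_normed_algebra,banach} \<Rightarrow> 'a"
    and star :: "'a \<Rightarrow> 'a"
  assumes "cstar_algebra scaleC star"
  shows "((\<exists>e::'a. quasi_identity e) \<longleftrightarrow> unital TYPE('a)) \<and>
         (\<forall>u e::'a. is_identity u \<longrightarrow> (quasi_identity e \<longleftrightarrow> e = u))"
proof -
  have idq: "quasi_identity u" if "is_identity u" for u :: 'a
    using that unfolding is_identity_def quasi_identity_def by simp
  have uniq: "e = u" if "is_identity u" "is_identity e" for u e :: 'a
    using that unfolding is_identity_def by metis
  show ?thesis
    using qi_identity[OF assms] idq uniq unfolding unital_def by metis
qed

end
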